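(* Let $F$ be a Banach lattice and $\tau$ a boundedly exhaustive linear topology on $F$ weaker than the norm topology. (i) If $E\subset F$ is a closed subspace on which $\tau$ agrees with the norm topology, then $E$ is $\infty$-dispersed; if every $\tau$-null sequence in $E$ is norm-null, then $E$ is dispersed. (ii) If a bounded operator $T:F\to H$ complements $\tau$, then $T$ is $\infty$-DNS; if $T$ sequentially complements $\tau$, then $T$ is DNS.
   Context: $\tau$ is boundedly exhaustive if every norm-bounded disjoint sequence ($|f_n|\wedge|f_m|=0$, $n\neq m$) is $\tau$-null. $T$ complements (resp. sequentially complements) $\tau$ if no net (resp. sequence) $(f_p)$ in the unit sphere $\mathrm{S}_F$ is $\tau$-null with $\|Tf_p\|\to0$. $T$ is DNS if no disjoint $(f_n)\subset\mathrm{S}_F$ has $\|Tf_n\|\to0$; $\infty$-DNS if there is $r>0$ with $\liminf_n\|Tf_n\|>r$ for all disjoint $(f_n)\subset\mathrm{S}_F$. $E$ is dispersed if $\liminf_n d(f_n,E)>0$ for all disjoint $(f_n)\subset\mathrm{S}_F$ (equivalently no unit vectors $e_n\in E$ and disjoint $f_n$ with $\|e_n-f_n\|\to0$); $\infty$-dispersed if there is $r>0$ with $\liminf_n d(f_n,E)>r$ for all disjoint $(f_n)\subset\mathrm{S}_F$. *)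

theory Defs
  imports "HOL-Analysis.Analysis"
begin

class banach_lattice = banach + ordered_real_vector + lattice +
  assumes lattice_norm_mono:
    "sup x (- x) \<le> sup y (- y) \<Longrightarrow> norm x \<le> norm y"

definition labs :: "'a::banach_lattice \<Rightarrow> 'a" where
  "labs x = sup x (- x)"

definition disjoint_seq :: "(nat \<Rightarrow> 'a::banach_lattice) \<Rightarrow> bool" where
  "disjoint_seq f \<longleftrightarrow> (\<forall>n m. n \<noteq> m \<longrightarrow> inf (labs (f n)) (labs (f m)) = 0)"

definition linear_topology :: "'a::real_normed_vector topology \<Rightarrow> bool" where
  "linear_topology \<tau> \<longleftrightarrow>
     topspace \<tau> = UNIV \<and>
     continuous_map (prod_topology \<tau> \<tau>) \<tau> (\<lambda>(x, y). x + y) \<and>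
     continuous_map (prod_topology euclideanreal \<tau>) \<tau> (\<lambda>(c, x). c *\<^sub>R x)"

definition weaker_than_norm :: "'a::real_normed_vector topology \<Rightarrow> bool" where
  "weaker_than_norm \<tau> \<longleftrightarrow> (\<forall>U. openin \<tau> U \<longrightarrow> open U)"

definition bdd_exhaustive :: "'a::banach_lattice topology \<Rightarrow> bool" where
  "bdd_exhaustive \<tau> \<longleftrightarrow>
     (\<forall>f. bounded (range f) \<and> disjoint_seq f \<longrightarrow> limitin \<tau> f 0 sequentially)"

text \<open>Nets are represented by (proper) filters on \<open>F\<close>: the net is the identity
  along the filter.\<close>
definition complements ::
    "'a::banach_lattice topology \<Rightarrow> ('a \<Rightarrow> 'b::real_normed_vector) \<Rightarrow> bool" where
  "complements \<tau> T \<longleftrightarrow>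
     \<not> (\<exists>N :: 'a filter. N \<noteq> bot \<and> eventually (\<lambda>x. x \<in> sphere 0 1) N \<and>
           limitin \<tau> (\<lambda>x. x) 0 N \<and> ((\<lambda>x. norm (T x)) \<longlongrightarrow> 0) N)"

definition seq_complements ::
    "'a::banach_lattice topology \<Rightarrow> ('a \<Rightarrow> 'b::real_normed_vector) \<Rightarrow> bool" where
  "seq_complements \<tau> T \<longleftrightarrow>
     \<not> (\<exists>f :: nat \<Rightarrow> 'a. (\<forall>n. f n \<in> sphere 0 1) \<and>
           limitin \<tau> f 0 sequentially \<and> (\<lambda>n. norm (T (f n))) \<longlonglongrightarrow> 0)"

definition DNS :: "('a::banach_lattice \<Rightarrow> 'b::real_normed_vector) \<Rightarrow> bool" where
  "DNS T \<longleftrightarrow>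
     \<not> (\<exists>f. (\<forall>n. f n \<in> sphere 0 1) \<and> disjoint_seq f \<and> (\<lambda>n. norm (T (f n))) \<longlonglongrightarrow> 0)"

definition inf_DNS :: "('a::banach_lattice \<Rightarrow> 'b::real_normed_vector) \<Rightarrow> bool" where
  "inf_DNS T \<longleftrightarrow>
     (\<exists>r>0. \<forall>f. (\<forall>n. f n \<in> sphere 0 1) \<and> disjoint_seq f \<longrightarrow>
        liminf (\<lambda>n. ereal (norm (T (f n)))) > ereal r)"

definition dispersed :: "'a::banach_lattice set \<Rightarrow> bool" where
  "dispersed E \<longleftrightarrow>
     (\<forall>f. (\<forall>n. f n \<in> sphere 0 1) \<and> disjoint_seq f \<longrightarrow>
        liminf (\<lambda>n. ereal (infdist (f n) E)) > 0)"

definition inf_dispersed :: "'a::banach_lattice set \<Rightarrow> bool" where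
  "inf_dispersed E \<longleftrightarrow>
     (\<exists>r>0. \<forall>f. (\<forall>n. f n \<in> sphere 0 1) \<and> disjoint_seq f \<longrightarrow>
        liminf (\<lambda>n. ereal (infdist (f n) E)) > ereal r)"

end

theory Submission
  imports Defs
begin

lemma infdist_lt_ex:
  assumes "infdist x E < d" "E \<noteq> {}"
  shows "\<exists>e\<in>E. dist x e < d"
proof -
  have "bdd_below ((\<lambda>a. dist x a) ` E)" by (rule bdd_belowI[of _ 0]) auto
  then show ?thesis using assms by (simp add: infdist_notempty cINF_less_iff)
qed

lemma norm_null_tau_null:
  assumes lin: "linear_topology \<tau>" and weak: "weaker_than_norm \<tau>"
    and f: "f \<longlonglongrightarrow> 0"
  shows "limitin \<tau> f 0 sequentially"
  unfolding limitin_def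
proof (intro conjI allI impI)
  show "0 \<in> topspace \<tau>" using lin by (simp add: linear_topology_def)
  fix U assume "openin \<tau> U \<and> 0 \<in> U"
  then have "open U" "0 \<in> U" using weak by (auto simp: weaker_than_norm_def)
  then show "\<forall>\<^sub>F n in sequentially. f n \<in> U" using topological_tendstoD[OF f] by blast
qed

lemma tau_null_add:
  assumes lin: "linear_topology \<tau>"
    and f: "limitin \<tau> f 0 F" and g: "limitin \<tau> g 0 F"
  shows "limitin \<tau> (\<lambda>n. f n + g n) 0 F"
proof -
  have c: "continuous_map (prod_topology \<tau> \<tau>) \<tau> (\<lambda>(x, y). x + y)"
    using lin by (simp add: linear_topology_def)
  have "limitin (prod_topology \<tau> \<tau>) (\<lambda>n. (f n, g n)) (0, 0) F"
    using f g by (simp add: limitin_pairwise o_def)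
  from continuous_map_limit[OF c this] show ?thesis by (simp add: o_def)
qed

lemma sphere_disj_null:
  assumes exh: "bdd_exhaustive \<tau>"
    and s: "\<forall>n. f n \<in> sphere 0 1" and d: "disjoint_seq f"
  shows "limitin \<tau> f 0 sequentially"
proof -
  have "range f \<subseteq> cball 0 1" using s by auto
  then have "bounded (range f)" by (rule bounded_subset[OF bounded_cball])
  with d exh show ?thesis unfolding bdd_exhaustive_def by blast
qed

lemma disjoint_seq_subseq:
  assumes "disjoint_seq f" "strict_mono r"
  shows "disjoint_seq (f \<circ> r)"
  using assms unfolding disjoint_seq_def by (auto simp: strict_mono_eq)

lemma not_liminf_gt_frequently:
  fixes X :: "nat \<Rightarrow> ereal"
  assumes "\<not> (liminf X > c)" "c < d"
  shows "\<exists>\<^sub>F n in sequentially. X n < d"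
proof (rule ccontr)
  assume "\<not> ?thesis"
  then have "\<forall>\<^sub>F n in sequentially. d \<le> X n" by (simp add: not_frequently not_less)
  then have "d \<le> liminf X" by (rule Liminf_bounded)
  then show False using assms by simp
qed

theorem mainTheorem14:
  fixes \<tau> :: "'a::banach_lattice topology"
  assumes lin: "linear_topology \<tau>"
    and weak: "weaker_than_norm \<tau>"
    and exh: "bdd_exhaustive \<tau>"
  shows "(\<forall>E :: 'a set. subspace E \<and> closed E \<and> subtopology \<tau> E = top_of_set E
            \<longrightarrow> inf_dispersed E)
       \<and> (\<forall>E :: 'a set. subspace E \<and> closed E \<and>
            (\<forall>f. (\<forall>n. f n \<in> E) \<and> limitin \<tau> f 0 sequentially \<longrightarrow> f \<longlonglongrightarrow> 0)
            \<longrightarrow> dispersed E)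
       \<and> (\<forall>T :: 'a \<Rightarrow> 'b::banach. bounded_linear T \<and> complements \<tau> T \<longrightarrow> inf_DNS T)
       \<and> (\<forall>T :: 'a \<Rightarrow> 'b::banach. bounded_linear T \<and> seq_complements \<tau> T \<longrightarrow> DNS T)"
proof -
  have oU: "openin \<tau> UNIV" using lin openin_topspace[of \<tau>] by (simp add: linear_topology_def)
  show ?thesis
proof (intro conjI allI impI)
  fix T :: "'a \<Rightarrow> 'b::banach"
  assume "bounded_linear T \<and> seq_complements \<tau> T"
  then show "DNS T" using sphere_disj_null[OF exh]
    unfolding DNS_def seq_complements_def by blast
next
  fix T :: "'a \<Rightarrow> 'b::banach"
  assume "bounded_linear T \<and> complements \<tau> T"
  then have cT: "complements \<tau> T" by simp
  show "inf_DNS T"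
  proof (rule ccontr)
    assume nd: "\<not> inf_DNS T"
    define I where "I = {(r, U). r > (0::real) \<and> openin \<tau> U \<and> (0::'a) \<in> U}"
    define S where "S = (\<lambda>(r, U). {x. x \<in> sphere (0::'a) 1 \<and> x \<in> U \<and> norm (T x) < r})"
    define N where "N = (INF i\<in>I. principal (S i))"
    have ne: "S i \<noteq> {}" if iI: "i \<in> I" for i
    proof -
      obtain r U where i: "i = (r, U)" "r > 0" "openin \<tau> U" "0 \<in> U"
        using iI unfolding I_def by blast
      obtain f where f: "\<forall>n. f n \<in> sphere 0 1" "disjoint_seq f"
        "\<not> (liminf (\<lambda>n. ereal (norm (T (f n)))) > ereal (r/2))"
        using nd i(2) unfolding inf_DNS_def by (metis half_gt_zero)
      have "\<exists>\<^sub>F n in sequentially. norm (T (f n)) < r"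
        using not_liminf_gt_frequently[OF f(3), of "ereal r"] i(2) by simp
      moreover have "\<forall>\<^sub>F n in sequentially. f n \<in> U"
        using sphere_disj_null[OF exh f(1,2)] i unfolding limitin_def by blast
      ultimately have "\<exists>\<^sub>F n in sequentially. norm (T (f n)) < r \<and> f n \<in> U"
        by (rule frequently_eventually_frequently)
      then obtain n where "norm (T (f n)) < r" "f n \<in> U" by (auto dest: frequently_ex)
      then have "f n \<in> S i" using f(1) by (simp add: S_def i)
      then show ?thesis by blast
    qed
    have I_ne: "I \<noteq> {}"
      using oU by (auto simp: I_def intro!: exI[of _ 1] exI[of _ UNIV])
    have dir: "\<exists>x\<in>I. principal (S x) \<le> inf (principal (S a)) (principal (S b))"
      if "a \<in> I" "b \<in> I" for a b
    proof -
      obtain r1 U1 r2 U2 where ab: "a = (r1, U1)" "b = (r2, U2)" by fastforce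
      show ?thesis
        using that
        by (intro bexI[of _ "(min r1 r2, U1 \<inter> U2)"])
           (auto simp: ab I_def S_def openin_Int)
    qed
    have evN: "eventually P N \<longleftrightarrow> (\<exists>i\<in>I. \<forall>x\<in>S i. P x)" for P
      unfolding N_def by (subst eventually_INF_base[OF I_ne dir]) (auto simp: eventually_principal)
    have "N \<noteq> bot"
      using evN[of "\<lambda>_. False"] ne by (auto simp: trivial_limit_def)
    moreover have "eventually (\<lambda>x. x \<in> sphere 0 1) N"
      using I_ne by (subst evN) (auto simp: S_def)
    moreover have "limitin \<tau> (\<lambda>x. x) 0 N"
      unfolding limitin_def
    proof (intro conjI allI impI)
      show "0 \<in> topspace \<tau>" using lin by (simp add: linear_topology_def)
      fix U assume "openin \<tau> U \<and> 0 \<in> U"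
      then have "(1, U) \<in> I" by (simp add: I_def)
      then show "\<forall>\<^sub>F x in N. x \<in> U" by (subst evN) (force simp: S_def)
    qed
    moreover have "((\<lambda>x. norm (T x)) \<longlongrightarrow> 0) N"
    proof (rule tendstoI)
      fix e :: real assume "e > 0"
      then have "(e, UNIV) \<in> I" using oU by (simp add: I_def)
      then show "\<forall>\<^sub>F x in N. dist (norm (T x)) 0 < e" by (subst evN) (force simp: S_def)
    qed
    ultimately show False using cT unfolding complements_def by blast
  qed
next
  fix E :: "'a set"
  assume "subspace E \<and> closed E \<and>
            (\<forall>f. (\<forall>n. f n \<in> E) \<and> limitin \<tau> f 0 sequentially \<longrightarrow> f \<longlonglongrightarrow> 0)"
  then have sE: "subspace E" and hE: "\<And>f. (\<forall>n. f n \<in> E) \<Longrightarrow> limitin \<tau> f 0 sequentially \<Longrightarrow> f \<longlonglongrightarrow> 0"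
    by auto
  have E_ne: "E \<noteq> {}" using sE subspace_0 by blast
  show "dispersed E"
    unfolding dispersed_def
  proof (intro allI impI)
    fix f :: "nat \<Rightarrow> 'a" assume f: "(\<forall>n. f n \<in> sphere 0 1) \<and> disjoint_seq f"
    show "liminf (\<lambda>n. ereal (infdist (f n) E)) > 0"
    proof (rule ccontr)
      assume nl: "\<not> ?thesis"
      have "0 \<le> liminf (\<lambda>n. ereal (infdist (f n) E))"
        by (intro Liminf_bounded always_eventually) (simp add: infdist_nonneg)
      with nl have l0: "liminf (\<lambda>n. ereal (infdist (f n) E)) = 0" by simp
      obtain r where r: "strict_mono r"
        "((\<lambda>n. ereal (infdist (f n) E)) \<circ> r) \<longlonglongrightarrow> liminf (\<lambda>n. ereal (infdist (f n) E))"
        using liminf_subseq_lim by blast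
      have "(\<lambda>k. ereal (infdist (f (r k)) E)) \<longlonglongrightarrow> ereal 0" using r(2) l0 by (simp add: o_def zero_ereal_def)
      then have d0: "(\<lambda>k. infdist (f (r k)) E) \<longlonglongrightarrow> 0" by (rule lim_ereal[THEN iffD1])
      have "\<exists>e\<in>E. dist (f (r k)) e < infdist (f (r k)) E + 1 / (Suc k)" for k
        by (rule infdist_lt_ex[OF _ E_ne]) simp
      then obtain e where e: "\<And>k. e k \<in> E"
        "\<And>k. dist (f (r k)) (e k) < infdist (f (r k)) E + 1 / (Suc k)"
        by metis
      have up0: "(\<lambda>k. infdist (f (r k)) E + 1 / real (Suc k)) \<longlonglongrightarrow> 0 + 0"
        by (intro tendsto_add d0 LIMSEQ_inverse_real_of_nat[simplified inverse_eq_divide])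
      have lo: "\<forall>\<^sub>F k in sequentially. 0 \<le> dist (f (r k)) (e k)" by simp
      have hi: "\<forall>\<^sub>F k in sequentially. dist (f (r k)) (e k) \<le> infdist (f (r k)) E + 1 / real (Suc k)"
        by (rule always_eventually) (metis e(2) less_imp_le)
      have "(\<lambda>k. dist (f (r k)) (e k)) \<longlonglongrightarrow> 0"
        using tendsto_sandwich[OF lo hi tendsto_const up0[unfolded add.right_neutral]] .
      then have "(\<lambda>k. norm (e k - f (r k))) \<longlonglongrightarrow> 0"
        by (simp add: dist_norm norm_minus_commute)
      then have de: "(\<lambda>k. e k - f (r k)) \<longlonglongrightarrow> 0"
        by (rule tendsto_norm_zero_cancel)
      have fr: "limitin \<tau> (f \<circ> r) 0 sequentially"
        using sphere_disj_null[OF exh, of "f \<circ> r"] f disjoint_seq_subseq[OF _ r(1), of f] by auto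
      have "limitin \<tau> (\<lambda>k. f (r k) + (e k - f (r k))) 0 sequentially"
        using tau_null_add[OF lin fr[unfolded o_def] norm_null_tau_null[OF lin weak de]] .
      then have "e \<longlonglongrightarrow> 0" using hE e(1) by simp
      then have "(\<lambda>k. e k - (e k - f (r k))) \<longlonglongrightarrow> 0 - 0" using de by (intro tendsto_diff)
      then have "(\<lambda>k. f (r k)) \<longlonglongrightarrow> 0" by simp
      then have "(\<lambda>k. norm (f (r k))) \<longlonglongrightarrow> 0" by (rule tendsto_norm_zero)
      moreover have "(\<lambda>k. norm (f (r k))) = (\<lambda>k. 1)" using f by auto
      ultimately have "(\<lambda>k. 1::real) \<longlonglongrightarrow> 0" by simp
      then show False by (simp add: LIMSEQ_const_iff)
    qed
  qed
next
  fix E :: "'a set"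
  assume "subspace E \<and> closed E \<and> subtopology \<tau> E = top_of_set E"
  then have sE: "subspace E" and tE: "subtopology \<tau> E = top_of_set E" by auto
  have E_ne: "E \<noteq> {}" using sE subspace_0 by blast
  have "openin (top_of_set E) (E \<inter> ball 0 (1/2))" by (auto simp: openin_open)
  then have "openin (subtopology \<tau> E) (E \<inter> ball 0 (1/2))" using tE by simp
  then obtain V where V: "openin \<tau> V" "E \<inter> ball 0 (1/2) = V \<inter> E"
    by (auto simp: openin_subtopology)
  have "0 \<in> V" using V(2) sE subspace_0 by fastforce
  have c: "continuous_map (prod_topology \<tau> \<tau>) \<tau> (\<lambda>(x, y). x + y)"
    using lin by (simp add: linear_topology_def)
  have "openin (prod_topology \<tau> \<tau>) {z \<in> topspace (prod_topology \<tau> \<tau>). (\<lambda>(x, y). x + y) z \<in> V}"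
    using openin_continuous_map_preimage[OF c V(1)] .
  moreover have "topspace (prod_topology \<tau> \<tau>) = UNIV"
    using lin by (simp add: linear_topology_def)
  ultimately have o2: "openin (prod_topology \<tau> \<tau>) {z. (\<lambda>(x, y). x + y) z \<in> V}" by simp
  have z: "((0::'a), (0::'a)) \<in> {z. (\<lambda>(x, y). x + y) z \<in> V}" using \<open>0 \<in> V\<close> by simp
  obtain W1 W2 where W: "openin \<tau> W1" "openin \<tau> W2" "0 \<in> W1" "0 \<in> W2"
      "W1 \<times> W2 \<subseteq> {z. (\<lambda>(x, y). x + y) z \<in> V}"
    using o2[unfolded openin_prod_topology_alt, rule_format, OF z] by blast
  have "open W2" using W(2) weak by (simp add: weaker_than_norm_def)
  then obtain \<delta> where \<delta>: "\<delta> > 0" "ball 0 \<delta> \<subseteq> W2" using W(4) open_contains_ball by blast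
  define \<delta>' where "\<delta>' = min \<delta> (1/2)"
  have \<delta>': "\<delta>' > 0" "\<delta>' \<le> 1/2" "ball 0 \<delta>' \<subseteq> W2" using \<delta> by (auto simp: \<delta>'_def)
  show "inf_dispersed E"
    unfolding inf_dispersed_def
  proof (rule ccontr)
    assume "\<not> (\<exists>r>0. \<forall>f. (\<forall>n. f n \<in> sphere 0 1) \<and> disjoint_seq f \<longrightarrow>
        ereal r < liminf (\<lambda>n. ereal (infdist (f n) E)))"
    then obtain f where f: "\<forall>n. f n \<in> sphere 0 1" "disjoint_seq f"
        "\<not> (liminf (\<lambda>n. ereal (infdist (f n) E)) > ereal (\<delta>'/2))"
      using \<delta>'(1) by (metis half_gt_zero)
    have "\<exists>\<^sub>F n in sequentially. infdist (f n) E < \<delta>'"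
      using not_liminf_gt_frequently[OF f(3), of "ereal \<delta>'"] \<delta>'(1) by simp
    moreover have "\<forall>\<^sub>F n in sequentially. f n \<in> W1"
      using sphere_disj_null[OF exh f(1,2)] W unfolding limitin_def by blast
    ultimately have "\<exists>\<^sub>F n in sequentially. infdist (f n) E < \<delta>' \<and> f n \<in> W1"
      by (rule frequently_eventually_frequently)
    then obtain n where n: "infdist (f n) E < \<delta>'" "f n \<in> W1" by (auto dest: frequently_ex)
    obtain e where e: "e \<in> E" "dist (f n) e < \<delta>'" using infdist_lt_ex[OF n(1) E_ne] by blast
    have "e - f n \<in> W2" using e(2) \<delta>'(3) by (auto simp: dist_norm norm_minus_commute)
    then have "(f n, e - f n) \<in> W1 \<times> W2" using n(2) by simp
    then have "(f n, e - f n) \<in> {z. (\<lambda>(x, y). x + y) z \<in> V}" using W(5) by (rule subsetD[rotated])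
    then have "f n + (e - f n) \<in> V" by simp
    then have "e \<in> ball 0 (1/2)" using V(2) e(1) by auto
    moreover have "norm (f n) = 1" using f(1) by simp
    moreover have "norm (f n - e) < \<delta>'" using e(2) by (simp add: dist_norm)
    ultimately show False using \<delta>'(2) norm_triangle_ineq2[of "f n" e] by simp
  qed
qed
qed

end
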